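(* Let $n>s+1$, let $(p_{ij})_{i\neq j}$ be a probability distribution on $\mathcal{P}_n$ with $p_{ij}=p_{ji}>0$ for all $i\neq j$, let $Y_0\in(\mathbb{R}^s)^n$ be arbitrary, and let $Y(t)$ be the solution of the gradient flow of relative entropy with $Y(0)=Y_0$. (i) If $\beta(x)=(1+x)^{-1}$, then there is a uniform constant $C$ such that $\operatorname{diam} Y(t)\le C\,t^{1/4}$ for all $t\ge 1$. (ii) If $\beta(x)=e^{-x}$, then there is a uniform constant $C$ such that $\operatorname{diam} Y(t)\le C$ for all $t\ge 0$.
   Context: Standing setup. Fix integers $s\ge 1$ and $n>s+1$. Let $\mathcal{P}_n=\{(i,j): i,j\in\{1,\dots,n\},\ i\neq j\}$. Let $(p_{ij})_{i\neq j}$ be a probability distribution on $\mathcal{P}_n$ (so $\sum_{i\neq j}p_{ij}=1$) with $p_{ij}=p_{ji}>0$ for all $i\neq j$. Let $\beta:[0,\infty)\to(0,\infty)$ be a smooth decreasing function with $\sup_{x\ge 0}|(\log\beta)'(x)|<\infty$. For points $Y=(y_1,\dots,y_n)$ with $y_i\in\mathbb{R}^s$ define $q_{ij}=\beta(|y_i-y_j|^2)/\sum_{k\neq \ell}\beta(|y_k-y_\ell|^2)$ for $i\neq j$, and the relative entropy $\mathcal{C}(Y)=\sum_{i\neq j}p_{ij}\log(p_{ij}/q_{ij})$. The gradient flow of $\mathcal{C}$ is the ODE system $$\frac{dy_i}{dt}=4\sum_{j\neq i}(p_{ij}-q_{ij})(y_i-y_j)(\log\beta)'(|y_i-y_j|^2),\qquad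 i=1,\dots,n,$$ which, for any initial data $Y_0=Y(0)\in(\mathbb{R}^s)^n$, has a solution $Y(t)=(y_1(t),\dots,y_n(t))$ for all $t\ge0$. $\operatorname{diam}Y=\max_{i,j}|y_i-y_j|$. A constant is "uniform" if it is independent of $t$ (it may depend on $n,s,Y_0,(p_{ij}),\beta$). *)

theory Defs
  imports "HOL-Analysis.Analysis"
begin

text \<open>Points are indexed by a finite type 'i (so n = CARD('i)), each point lies in
  real^'s (so s = CARD('s)). A configuration Y is an element of (real^'s)^'i.\<close>

definition qij :: "(real \<Rightarrow> real) \<Rightarrow> (real^'s)^'i::finite \<Rightarrow> 'i \<Rightarrow> 'i \<Rightarrow> real" where
  "qij \<beta> Y i j = \<beta> ((norm (Y $ i - Y $ j))\<^sup>2) /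
     (\<Sum>k\<in>UNIV. \<Sum>l\<in>UNIV - {k}. \<beta> ((norm (Y $ k - Y $ l))\<^sup>2))"

definition flow_field :: "(real \<Rightarrow> real) \<Rightarrow> ('i::finite \<Rightarrow> 'i \<Rightarrow> real)
     \<Rightarrow> (real^'s)^'i \<Rightarrow> (real^'s)^'i" where
  "flow_field \<beta> p Y = (\<chi> i. 4 *\<^sub>R (\<Sum>j\<in>UNIV - {i}.
      ((p i j - qij \<beta> Y i j) * deriv (\<lambda>x. ln (\<beta> x)) ((norm (Y $ i - Y $ j))\<^sup>2))
        *\<^sub>R (Y $ i - Y $ j)))"

definition is_flow :: "(real \<Rightarrow> real) \<Rightarrow> ('i::finite \<Rightarrow> 'i \<Rightarrow> real)
     \<Rightarrow> (real \<Rightarrow> (real^'s)^'i) \<Rightarrow> bool" where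
  "is_flow \<beta> p Y \<longleftrightarrow> (\<forall>t\<ge>0. (Y has_vector_derivative flow_field \<beta> p (Y t)) (at t within {0..}))"

definition config_diam :: "(real^'s)^'i::finite \<Rightarrow> real" where
  "config_diam Y = Max {dist (Y $ i) (Y $ j) | i j. True}"

definition admissible_p :: "('i::finite \<Rightarrow> 'i \<Rightarrow> real) \<Rightarrow> bool" where
  "admissible_p p \<longleftrightarrow> (\<forall>i j. i \<noteq> j \<longrightarrow> p i j = p j i \<and> p i j > 0)
     \<and> (\<Sum>i\<in>UNIV. \<Sum>j\<in>UNIV - {i}. p i j) = 1"

end

theory Submission
  imports Defs "HOL-Analysis.Analysis"
begin


lemma growth_bound:
  fixes f f' :: "real \<Rightarrow> real"
  assumes d: "\<And>t. t \<ge> 0 \<Longrightarrow> (f has_real_derivative f' t) (at t within {0..})"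
    and b: "\<And>t. t \<ge> 0 \<Longrightarrow> f' t \<le> C" and t: "t \<ge> 0"
  shows "f t \<le> f 0 + C * t"
proof -
  have "\<exists>x\<in>{0..t}. f t - f 0 = (\<lambda>h. f' x * h) (t - 0)"
  proof (rule mvt_very_simple[OF t])
    fix x assume "0 \<le> x" "x \<le> t"
    then have "(f has_real_derivative f' x) (at x within {0..t})"
      using has_field_derivative_subset[OF d[of x]] by auto
    then show "(f has_derivative (\<lambda>h. f' x * h)) (at x within {0..t})"
      by (simp add: has_field_derivative_def)
  qed
  then obtain x where x: "x \<in> {0..t}" "f t - f 0 = f' x * t" by auto
  have "f' x * t \<le> C * t" using b[of x] x(1) t by (auto intro: mult_right_mono)
  with x show ?thesis by linarith
qed

lemma dist2_deriv:
  fixes Y :: "real \<Rightarrow> (real^'s)^'i::finite"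
  assumes "(Y has_vector_derivative Y') (at t within S)"
  shows "((\<lambda>t. (norm (Y t $ i - Y t $ j))\<^sup>2) has_real_derivative
          2 * ((Y t $ i - Y t $ j) \<bullet> (Y' $ i - Y' $ j))) (at t within S)"
proof -
  have a: "((\<lambda>t. Y t $ i - Y t $ j) has_vector_derivative (Y' $ i - Y' $ j)) (at t within S)"
    by (intro has_vector_derivative_diff bounded_linear.has_vector_derivative[OF bounded_linear_vec_nth assms])
  have "((\<lambda>t. (Y t $ i - Y t $ j) \<bullet> (Y t $ i - Y t $ j)) has_derivative
     (\<lambda>h. (Y t $ i - Y t $ j) \<bullet> (h *\<^sub>R (Y' $ i - Y' $ j)) + (h *\<^sub>R (Y' $ i - Y' $ j)) \<bullet> (Y t $ i - Y t $ j))) (at t within S)"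
    using has_derivative_inner[OF a[unfolded has_vector_derivative_def] a[unfolded has_vector_derivative_def]] .
  then show ?thesis
    unfolding has_field_derivative_def power2_norm_eq_inner
    by (rule has_derivative_eq_rhs) (auto simp: inner_commute algebra_simps)
qed

lemma double_sum_bound:
  fixes U :: "'a \<Rightarrow> real"
  assumes "finite S"
  shows "(\<Sum>v\<in>S. \<Sum>w\<in>S. ((U v)\<^sup>2 + (U w)\<^sup>2) / 2) = real (card S) * (\<Sum>v\<in>S. (U v)\<^sup>2)"
proof -
  have "(\<Sum>v\<in>S. \<Sum>w\<in>S. ((U v)\<^sup>2 + (U w)\<^sup>2) / 2)
      = (\<Sum>v\<in>S. \<Sum>w\<in>S. (U v)\<^sup>2 / 2) + (\<Sum>v\<in>S. \<Sum>w\<in>S. (U w)\<^sup>2 / 2)"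
    by (simp add: sum.distrib add_divide_distrib)
  also have "\<dots> = real (card S) * (\<Sum>v\<in>S. (U v)\<^sup>2)"
    by (simp add: sum_divide_distrib[symmetric] sum_distrib_left[symmetric] sum_distrib_right[symmetric])
  finally show ?thesis .
qed

lemma abs_prod_le: "\<bar>a * b\<bar> \<le> ((a::real)\<^sup>2 + b\<^sup>2) / 2"
proof -
  have "0 \<le> (\<bar>a\<bar> - \<bar>b\<bar>)\<^sup>2" by simp
  then show ?thesis by (simp add: power2_eq_square abs_mult algebra_simps flip: power2_abs)
qed

lemma geom:
  fixes y :: "(real^'s)^'i::finite"
  assumes card: "CARD('i) \<ge> CARD('s) + 2"
    and lo: "\<And>i j. i \<noteq> j \<Longrightarrow> m \<le> (norm (y$i - y$j))\<^sup>2"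
    and hi: "\<And>i j. (norm (y$i - y$j))\<^sup>2 \<le> D"
  shows "m \<le> (1 - 1 / (2 * real CARD('i))) * D"
proof (rule ccontr)
  define N where "N = real CARD('i)"
  have N0: "N > 0" unfolding N_def by simp
  assume "\<not> ?thesis"
  then have mD: "m > (1 - 1 / (2 * N)) * D" unfolding N_def by simp
  have D0: "D \<ge> 0" using hi[of undefined undefined] by simp
  have N1: "N \<ge> 1" unfolding N_def using finite_UNIV_card_ge_0[where 'a='i] by (simp add: Suc_leI)
  have "1 - 1 / (2 * N) \<ge> 0" using N1 by (simp add: field_simps)
  then have m0: "m > 0" using mD D0 by (smt (verit) mult_nonneg_nonneg)
  define S where "S = range (\<lambda>i. y $ i)"
  have inj: "inj (\<lambda>i. y $ i)"
  proof (rule injI)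
    fix i j assume "y $ i = y $ j"
    then show "i = j" using lo[of i j] m0 by fastforce
  qed
  have finS: "finite S" unfolding S_def by simp
  have cardS: "card S = CARD('i)" unfolding S_def using card_image[OF inj] by simp
  have pair: "m \<le> (norm (v - w))\<^sup>2 \<and> (norm (v - w))\<^sup>2 \<le> D" if "v \<in> S" "w \<in> S" "v \<noteq> w" for v w
    using that hi unfolding S_def by (auto intro: lo)
  have Dpos: "D > 0"
  proof -
    have "\<not> card S \<le> Suc 0" using cardS card by simp
    then obtain v w where "v \<in> S" "w \<in> S" "v \<noteq> w" using card_le_Suc0_iff_eq[OF finS] by blast
    then show ?thesis using pair m0 by force
  qed
  have "affine_dependent S"
    by (rule affine_dependent_biggerset[OF finS]) (use card cardS in simp)
  then obtain U where U: "sum U S = 0" "\<exists>v\<in>S. U v \<noteq> 0" "(\<Sum>v\<in>S. U v *\<^sub>R v) = 0"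
    using affine_dependent_explicit_finite[OF finS] by blast
  have ident: "(\<Sum>v\<in>S. \<Sum>w\<in>S. U v * U w * (norm (v - w))\<^sup>2) = 0"
  proof -
    have e: "(norm (v - w))\<^sup>2 = v \<bullet> v + w \<bullet> w - 2 * (v \<bullet> w)" for v w :: "real^'s"
      by (simp add: power2_norm_eq_inner algebra_simps inner_commute)
    have s1: "(\<Sum>v\<in>S. \<Sum>w\<in>S. U v * U w * (v \<bullet> v)) = 0"
      by (simp add: sum_distrib_left[symmetric] sum_distrib_right[symmetric] U(1) mult.commute mult.left_commute)
    have s2: "(\<Sum>v\<in>S. \<Sum>w\<in>S. U v * U w * (w \<bullet> w)) = 0"
      by (simp add: sum_distrib_left[symmetric] sum_distrib_right[symmetric] U(1) mult.assoc)
    have s3: "(\<Sum>v\<in>S. \<Sum>w\<in>S. U v * U w * (v \<bullet> w)) = (\<Sum>v\<in>S. U v *\<^sub>R v) \<bullet> (\<Sum>w\<in>S. U w *\<^sub>R w)"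
      by (simp add: inner_sum_left inner_sum_right sum_distrib_left mult.assoc, subst sum.swap, simp add: mult.left_commute)
    have "(\<Sum>v\<in>S. \<Sum>w\<in>S. U v * U w * (norm (v - w))\<^sup>2)
       = (\<Sum>v\<in>S. \<Sum>w\<in>S. U v * U w * (v \<bullet> v)) + (\<Sum>v\<in>S. \<Sum>w\<in>S. U v * U w * (w \<bullet> w))
         - 2 * (\<Sum>v\<in>S. \<Sum>w\<in>S. U v * U w * (v \<bullet> w))"
      by (simp add: e algebra_simps sum.distrib sum_subtractf sum_distrib_left)
    then show ?thesis using s1 s2 s3 U(3) by simp
  qed
  define eps where "eps = 1 / (2 * N)"
  have trm: "U v * U w * ((norm (v - w))\<^sup>2 - D + (if v = w then D else 0))
       \<le> eps * D * (((U v)\<^sup>2 + (U w)\<^sup>2) / 2)" if "v \<in> S" "w \<in> S" for v w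
  proof (cases "v = w")
    case True
    have "eps \<ge> 0" unfolding eps_def using N0 by simp
    then show ?thesis using True D0 by simp
  next
    case False
    define x where "x = (norm (v - w))\<^sup>2 - D"
    have x: "x \<le> 0" "- (eps * D) \<le> x" using pair[OF that False] mD unfolding x_def eps_def
      by (auto simp: algebra_simps)
    have "U v * U w * x \<le> \<bar>U v * U w\<bar> * (eps * D)"
    proof -
      have "U v * U w * x \<le> \<bar>U v * U w * x\<bar>" by simp
      also have "\<dots> = \<bar>U v * U w\<bar> * \<bar>x\<bar>" by (simp add: abs_mult)
      also have "\<dots> \<le> \<bar>U v * U w\<bar> * (eps * D)" using x by (intro mult_left_mono) auto
      finally show ?thesis .
    qed
    also have "\<dots> \<le> (((U v)\<^sup>2 + (U w)\<^sup>2) / 2) * (eps * D)"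
    proof (rule mult_right_mono)
      show "\<bar>U v * U w\<bar> \<le> ((U v)\<^sup>2 + (U w)\<^sup>2) / 2"
        by (rule abs_prod_le)
      show "0 \<le> eps * D" unfolding eps_def using N0 D0 by simp
    qed
    finally show ?thesis using False unfolding x_def by (simp add: mult.commute)
  qed
  have lhs: "(\<Sum>v\<in>S. \<Sum>w\<in>S. U v * U w * ((norm (v - w))\<^sup>2 - D + (if v = w then D else 0)))
      = D * (\<Sum>v\<in>S. (U v)\<^sup>2)"
  proof -
    have a: "(\<Sum>v\<in>S. \<Sum>w\<in>S. U v * U w * D) = 0"
      by (simp add: sum_distrib_left[symmetric] sum_distrib_right[symmetric] U(1))
    have b: "(\<Sum>v\<in>S. \<Sum>w\<in>S. U v * U w * (if v = w then D else 0)) = D * (\<Sum>v\<in>S. (U v)\<^sup>2)"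
      using finS by (simp add: if_distrib[where f="\<lambda>z. _ * z"] sum.delta sum_distrib_left power2_eq_square
          mult.commute mult.left_commute cong: if_cong)
    show ?thesis using ident a b
      by (simp add: algebra_simps sum.distrib sum_subtractf)
  qed
  have "D * (\<Sum>v\<in>S. (U v)\<^sup>2) \<le> (\<Sum>v\<in>S. \<Sum>w\<in>S. eps * D * (((U v)\<^sup>2 + (U w)\<^sup>2) / 2))"
    unfolding lhs[symmetric] by (intro sum_mono trm) auto
  also have "\<dots> = eps * D * (\<Sum>v\<in>S. \<Sum>w\<in>S. ((U v)\<^sup>2 + (U w)\<^sup>2) / 2)"
    by (simp only: sum_distrib_left)
  also have "\<dots> = eps * D * (real (card S) * (\<Sum>v\<in>S. (U v)\<^sup>2))"
    using double_sum_bound[OF finS, of U] by simp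
  also have "\<dots> = D * (\<Sum>v\<in>S. (U v)\<^sup>2) / 2"
    using cardS N0 unfolding eps_def N_def by simp
  finally have "D * (\<Sum>v\<in>S. (U v)\<^sup>2) \<le> 0" by simp
  moreover have "(\<Sum>v\<in>S. (U v)\<^sup>2) > 0"
  proof -
    obtain v where "v \<in> S" "U v \<noteq> 0" using U(2) by blast
    then have "(U v)\<^sup>2 \<le> (\<Sum>v\<in>S. (U v)\<^sup>2)" using finS
      by (intro member_le_sum) auto
    moreover have "(U v)\<^sup>2 > 0" using \<open>U v \<noteq> 0\<close> by simp
    ultimately show ?thesis by linarith
  qed
  ultimately show False using Dpos by (simp add: mult_le_0_iff)
qed



lemma offdiag_sum:
  fixes f :: "'i::finite \<Rightarrow> 'b::ab_group_add"
  assumes "f i = 0"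
  shows "sum f (UNIV - {i}) = sum f UNIV"
  using assms by (simp add: sum_diff1)

lemma symsum:
  fixes y z :: "'i::finite \<Rightarrow> 'a::real_inner" and u :: "'i \<Rightarrow> 'i \<Rightarrow> real"
  assumes sym: "\<And>i j. i \<noteq> j \<Longrightarrow> u i j = u j i"
  shows "(\<Sum>i\<in>UNIV. \<Sum>j\<in>UNIV-{i}. u i j * ((y i - y j) \<bullet> (z i - z j)))
       = 2 * (\<Sum>i\<in>UNIV. z i \<bullet> (\<Sum>j\<in>UNIV-{i}. u i j *\<^sub>R (y i - y j)))"
proof -
  have L: "(\<Sum>i\<in>UNIV. \<Sum>j\<in>UNIV-{i}. u i j * ((y i - y j) \<bullet> (z i - z j)))
     = (\<Sum>i\<in>UNIV. \<Sum>j\<in>UNIV. u i j * ((y i - y j) \<bullet> (z i - z j)))"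
    by (intro sum.cong refl offdiag_sum) simp
  have R: "(\<Sum>i\<in>UNIV. z i \<bullet> (\<Sum>j\<in>UNIV-{i}. u i j *\<^sub>R (y i - y j)))
     = (\<Sum>i\<in>UNIV. \<Sum>j\<in>UNIV. u i j * ((y i - y j) \<bullet> z i))"
  proof (intro sum.cong refl)
    fix i
    have "z i \<bullet> (\<Sum>j\<in>UNIV-{i}. u i j *\<^sub>R (y i - y j)) = z i \<bullet> (\<Sum>j\<in>UNIV. u i j *\<^sub>R (y i - y j))"
      by (subst offdiag_sum) simp_all
    also have "\<dots> = (\<Sum>j\<in>UNIV. u i j * ((y i - y j) \<bullet> z i))"
      by (simp add: inner_sum_right inner_commute)
    finally show "z i \<bullet> (\<Sum>j\<in>UNIV-{i}. u i j *\<^sub>R (y i - y j)) = (\<Sum>j\<in>UNIV. u i j * ((y i - y j) \<bullet> z i))" .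
  qed
  have sw: "(\<Sum>i\<in>UNIV. \<Sum>j\<in>UNIV. u i j * ((y i - y j) \<bullet> z j))
      = - (\<Sum>i\<in>UNIV. \<Sum>j\<in>UNIV. u i j * ((y i - y j) \<bullet> z i))"
  proof -
    have "(\<Sum>i\<in>UNIV. \<Sum>j\<in>UNIV. u i j * ((y i - y j) \<bullet> z j))
        = (\<Sum>j\<in>UNIV. \<Sum>i\<in>UNIV. u i j * ((y i - y j) \<bullet> z j))"
      by (rule sum.swap)
    also have "\<dots> = (\<Sum>j\<in>UNIV. \<Sum>i\<in>UNIV. - (u j i * ((y j - y i) \<bullet> z j)))"
    proof (intro sum.cong refl)
      fix i j
      show "u i j * ((y i - y j) \<bullet> z j) = - (u j i * ((y j - y i) \<bullet> z j))"
        by (cases "i = j") (simp_all add: sym inner_diff_left algebra_simps)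
    qed
    also have "\<dots> = - (\<Sum>i\<in>UNIV. \<Sum>j\<in>UNIV. u i j * ((y i - y j) \<bullet> z i))"
      by (simp add: sum_negf)
    finally show ?thesis .
  qed
  have "(\<Sum>i\<in>UNIV. \<Sum>j\<in>UNIV. u i j * ((y i - y j) \<bullet> (z i - z j)))
      = (\<Sum>i\<in>UNIV. \<Sum>j\<in>UNIV. u i j * ((y i - y j) \<bullet> z i))
        - (\<Sum>i\<in>UNIV. \<Sum>j\<in>UNIV. u i j * ((y i - y j) \<bullet> z j))"
    by (simp only: inner_diff_right right_diff_distrib sum_subtractf)
  then show ?thesis using L R sw by simp
qed

definition dd :: "(real^'s)^'i::finite \<Rightarrow> 'i \<Rightarrow> 'i \<Rightarrow> real" where
  "dd Y i j = (norm (Y $ i - Y $ j))\<^sup>2"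

definition Zf :: "(real \<Rightarrow> real) \<Rightarrow> (real^'s)^'i::finite \<Rightarrow> real" where
  "Zf \<beta> Y = (\<Sum>k\<in>UNIV. \<Sum>l\<in>UNIV - {k}. \<beta> (dd Y k l))"

definition En :: "(real \<Rightarrow> real) \<Rightarrow> ('i::finite \<Rightarrow> 'i \<Rightarrow> real) \<Rightarrow> (real^'s)^'i \<Rightarrow> real" where
  "En \<beta> p Y = - (\<Sum>i\<in>UNIV. \<Sum>j\<in>UNIV-{i}. p i j * ln (\<beta> (dd Y i j))) + ln (Zf \<beta> Y)"

lemma dd_sym: "dd Y i j = dd Y j i"
  by (simp add: dd_def norm_minus_commute)

lemma dd_nonneg: "dd Y i j \<ge> 0"
  by (simp add: dd_def)

lemma Zf_pos:
  fixes Y :: "(real^'s)^'i::finite"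
  assumes pos: "\<And>x. x \<ge> 0 \<Longrightarrow> \<beta> x > 0" and card: "CARD('i) \<ge> 2"
  shows "Zf \<beta> Y > 0"
proof -
  have "\<not> CARD('i) \<le> Suc 0" using card by simp
  then obtain a b :: 'i where ab: "a \<noteq> b" using card_le_Suc0_iff_eq[of "UNIV::'i set"] by auto
  have "\<beta> (dd Y a b) \<le> (\<Sum>l\<in>UNIV - {a}. \<beta> (dd Y a l))"
    using ab pos dd_nonneg by (intro member_le_sum) (auto intro: less_imp_le[OF pos] dd_nonneg)
  also have "\<dots> \<le> Zf \<beta> Y" unfolding Zf_def
    using pos dd_nonneg
    by (intro member_le_sum[where f="\<lambda>k. \<Sum>l\<in>UNIV - {k}. \<beta> (dd Y k l)"]) (auto intro!: sum_nonneg less_imp_le[OF pos] dd_nonneg)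
  finally show ?thesis using pos[OF dd_nonneg[of Y a b]] by linarith
qed

lemma energy_deriv:
  fixes Y :: "real \<Rightarrow> (real^'s)^'i::finite" and p :: "'i \<Rightarrow> 'i \<Rightarrow> real"
  assumes flow: "is_flow \<beta> p Y" and t: "t \<ge> 0"
    and pos: "\<And>x. x \<ge> 0 \<Longrightarrow> \<beta> x > 0"
    and db: "\<And>x. x \<ge> 0 \<Longrightarrow> (\<beta> has_real_derivative (\<beta> x * g x)) (at x)"
    and dg: "\<And>x. x \<ge> 0 \<Longrightarrow> deriv (\<lambda>x. ln (\<beta> x)) x = g x"
    and psym: "\<And>i j. i \<noteq> j \<Longrightarrow> p i j = p j i"
    and card: "CARD('i) \<ge> 2"
  shows "\<exists>E'. ((\<lambda>t. En \<beta> p (Y t)) has_real_derivative E') (at t within {0..}) \<and> E' \<le> 0"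
proof -
  define y where "y = Y t"
  define F where "F = flow_field \<beta> p y"
  have YF: "(Y has_vector_derivative F) (at t within {0..})"
    using flow t unfolding is_flow_def F_def y_def by auto
  define D where "D i j = 2 * ((y$i - y$j) \<bullet> (F$i - F$j))" for i j
  have hd: "((\<lambda>t. dd (Y t) i j) has_real_derivative D i j) (at t within {0..})" for i j
    unfolding dd_def D_def y_def using dist2_deriv[OF YF] .
  have bd: "((\<lambda>t. \<beta> (dd (Y t) i j)) has_real_derivative \<beta> (dd y i j) * g (dd y i j) * D i j) (at t within {0..})" for i j
    using DERIV_chain2[OF db[OF dd_nonneg] hd[of i j]] unfolding y_def .
  have lbd: "((\<lambda>t. ln (\<beta> (dd (Y t) i j))) has_real_derivative g (dd y i j) * D i j) (at t within {0..})" for i j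
  proof -
    have "((\<lambda>t. ln (\<beta> (dd (Y t) i j))) has_real_derivative
        inverse (\<beta> (dd y i j)) * (\<beta> (dd y i j) * g (dd y i j) * D i j)) (at t within {0..})"
      using DERIV_chain2[OF DERIV_ln[OF pos[OF dd_nonneg]] bd[of i j]] unfolding y_def .
    then show ?thesis
      by (rule DERIV_cong) (use pos[OF dd_nonneg, of y i j] in simp)
  qed
  define P' where "P' = (\<Sum>i\<in>UNIV. \<Sum>j\<in>UNIV-{i}. p i j * (g (dd y i j) * D i j))"
  define Z' where "Z' = (\<Sum>k\<in>UNIV. \<Sum>l\<in>UNIV-{k}. \<beta> (dd y k l) * g (dd y k l) * D k l)"
  have Pd: "((\<lambda>t. \<Sum>i\<in>UNIV. \<Sum>j\<in>UNIV-{i}. p i j * ln (\<beta> (dd (Y t) i j))) has_real_derivative P') (at t within {0..})"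
    unfolding P'_def by (intro DERIV_sum DERIV_cmult lbd)
  have Zd: "((\<lambda>t. Zf \<beta> (Y t)) has_real_derivative Z') (at t within {0..})"
    unfolding Z'_def Zf_def by (intro DERIV_sum bd)
  have Zp: "Zf \<beta> y > 0" using Zf_pos[OF pos card] .
  have lZd: "((\<lambda>t. ln (Zf \<beta> (Y t))) has_real_derivative inverse (Zf \<beta> y) * Z') (at t within {0..})"
    using DERIV_chain2[OF DERIV_ln[OF Zp[unfolded y_def]] Zd] unfolding y_def .
  have Ed: "((\<lambda>t. En \<beta> p (Y t)) has_real_derivative (- P' + inverse (Zf \<beta> y) * Z')) (at t within {0..})"
    unfolding En_def by (intro DERIV_add DERIV_minus Pd lZd)
  define u where "u i j = (p i j - qij \<beta> y i j) * deriv (\<lambda>x. ln (\<beta> x)) ((norm (y$i - y$j))\<^sup>2)" for i j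
  define V where "V i = (\<Sum>j\<in>UNIV-{i}. u i j *\<^sub>R (y$i - y$j))" for i
  have Fi: "F$i = 4 *\<^sub>R V i" for i unfolding F_def flow_field_def V_def u_def by simp
  have usym: "u i j = u j i" if "i \<noteq> j" for i j
    unfolding u_def qij_def using psym[OF that] by (simp add: norm_minus_commute)
  have q: "qij \<beta> y i j = \<beta> (dd y i j) / Zf \<beta> y" for i j unfolding qij_def Zf_def dd_def by simp
  have ug: "u i j = (p i j - \<beta> (dd y i j) / Zf \<beta> y) * g (dd y i j)" for i j
    unfolding u_def q using dg[OF dd_nonneg[of y i j]] by (simp add: dd_def)
  have X: "inverse (Zf \<beta> y) * Z' = (\<Sum>i\<in>UNIV. \<Sum>j\<in>UNIV-{i}. (\<beta> (dd y i j) / Zf \<beta> y) * (g (dd y i j) * D i j))"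
    unfolding Z'_def sum_distrib_left by (intro sum.cong refl) (simp add: divide_inverse mult.commute mult.left_commute)
  have uD: "(\<Sum>i\<in>UNIV. \<Sum>j\<in>UNIV-{i}. u i j * D i j) = P' - inverse (Zf \<beta> y) * Z'"
    unfolding X P'_def sum_subtractf[symmetric] by (intro sum.cong refl) (simp add: ug algebra_simps)
  have "(\<Sum>i\<in>UNIV. \<Sum>j\<in>UNIV-{i}. u i j * D i j)
      = 2 * (\<Sum>i\<in>UNIV. \<Sum>j\<in>UNIV-{i}. u i j * (((\<lambda>i. y$i) i - (\<lambda>i. y$i) j) \<bullet> ((\<lambda>i. F$i) i - (\<lambda>i. F$i) j)))"
    unfolding D_def by (simp add: sum_distrib_left mult.left_commute)
  also have "\<dots> = 2 * (2 * (\<Sum>i\<in>UNIV. F$i \<bullet> V i))"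
    using symsum[of u "\<lambda>i. y$i" "\<lambda>i. F$i", OF usym] unfolding V_def by simp
  also have "\<dots> = 16 * (\<Sum>i\<in>UNIV. V i \<bullet> V i)"
    by (simp add: Fi sum_distrib_left)
  finally have "- P' + inverse (Zf \<beta> y) * Z' = - (16 * (\<Sum>i\<in>UNIV. V i \<bullet> V i))"
    using uD by simp
  moreover have "(\<Sum>i\<in>UNIV. V i \<bullet> V i) \<ge> 0" by (intro sum_nonneg) simp
  ultimately show ?thesis using Ed by (intro exI[of _ "- P' + inverse (Zf \<beta> y) * Z'"]) simp
qed



lemma energy_mono:
  fixes Y :: "real \<Rightarrow> (real^'s)^'i::finite" and p :: "'i \<Rightarrow> 'i \<Rightarrow> real"
  assumes flow: "is_flow \<beta> p Y" and t: "t \<ge> 0"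
    and pos: "\<And>x. x \<ge> 0 \<Longrightarrow> \<beta> x > 0"
    and db: "\<And>x. x \<ge> 0 \<Longrightarrow> (\<beta> has_real_derivative (\<beta> x * g x)) (at x)"
    and dg: "\<And>x. x \<ge> 0 \<Longrightarrow> deriv (\<lambda>x. ln (\<beta> x)) x = g x"
    and psym: "\<And>i j. i \<noteq> j \<Longrightarrow> p i j = p j i"
    and card: "CARD('i) \<ge> 2"
  shows "En \<beta> p (Y t) \<le> En \<beta> p (Y 0)"
proof -
  have "\<forall>t. \<exists>E'. t \<ge> 0 \<longrightarrow> ((\<lambda>t. En \<beta> p (Y t)) has_real_derivative E') (at t within {0..}) \<and> E' \<le> 0"
    using energy_deriv[OF flow _ pos db dg psym card] by blast
  then obtain E' where E': "\<And>t. t \<ge> 0 \<Longrightarrow> ((\<lambda>t. En \<beta> p (Y t)) has_real_derivative E' t) (at t within {0..}) \<and> E' t \<le> 0"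
    by metis
  have "En \<beta> p (Y t) \<le> En \<beta> p (Y 0) + 0 * t"
    by (rule growth_bound[where f="\<lambda>t. En \<beta> p (Y t)" and f'=E']) (use E' t in auto)
  then show ?thesis by simp
qed

lemma diam_attained:
  fixes Y :: "(real^'s)^'i::finite"
  shows "\<exists>a b. config_diam Y = dist (Y$a) (Y$b) \<and> (\<forall>i j. dist (Y$i) (Y$j) \<le> config_diam Y)"
proof -
  have eq: "{dist (Y $ i) (Y $ j) |i j. True} = (\<lambda>(i,j). dist (Y$i) (Y$j)) ` UNIV" by auto
  have fin: "finite {dist (Y $ i) (Y $ j) |i j. True}" unfolding eq by simp
  have ne: "{dist (Y $ i) (Y $ j) |i j. True} \<noteq> {}" by auto
  from Max_in[OF fin ne] obtain a b where "config_diam Y = dist (Y$a) (Y$b)"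
    unfolding config_diam_def by auto
  moreover have "\<forall>i j. dist (Y$i) (Y$j) \<le> config_diam Y"
    unfolding config_diam_def using Max_ge[OF fin] by auto
  ultimately show ?thesis by blast
qed

lemma min_pair:
  fixes f :: "'i::finite \<Rightarrow> 'i \<Rightarrow> real"
  assumes card: "CARD('i) \<ge> 2"
  shows "\<exists>k l. k \<noteq> l \<and> (\<forall>i j. i \<noteq> j \<longrightarrow> f k l \<le> f i j)"
proof -
  let ?S = "(\<lambda>(i,j). f i j) ` {(i,j). i \<noteq> j}"
  have "\<not> CARD('i) \<le> Suc 0" using card by simp
  then obtain a b :: 'i where ab: "a \<noteq> b" using card_le_Suc0_iff_eq[of "UNIV::'i set"] by auto
  have fin: "finite ?S" by simp
  have ne: "?S \<noteq> {}" using ab by auto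
  from Min_in[OF fin ne] obtain k l where kl: "k \<noteq> l" "Min ?S = f k l" by auto
  have "\<forall>i j. i \<noteq> j \<longrightarrow> f k l \<le> f i j"
    using Min_le[OF fin] kl(2) by force
  with kl show ?thesis by blast
qed

lemma pmin:
  fixes p :: "'i::finite \<Rightarrow> 'i \<Rightarrow> real"
  assumes "admissible_p p"
  shows "\<exists>P0>0. \<forall>i j. i \<noteq> j \<longrightarrow> P0 \<le> p i j"
proof (cases "\<exists>i j::'i. i \<noteq> j")
  case True
  then have "\<not> CARD('i) \<le> Suc 0" using card_le_Suc0_iff_eq[of "UNIV::'i set"] by auto
  then have "CARD('i) \<ge> 2" by simp
  from min_pair[OF this, of p] obtain k l where kl: "k \<noteq> l" "\<forall>i j. i \<noteq> j \<longrightarrow> p k l \<le> p i j" by blast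
  moreover have "p k l > 0" using assms kl(1) unfolding admissible_p_def by blast
  ultimately show ?thesis by blast
next
  case False then show ?thesis by (intro exI[of _ 1]) auto
qed

lemma sum_p:
  assumes "admissible_p p"
  shows "(\<Sum>i\<in>UNIV. \<Sum>j\<in>UNIV-{i}. p i j) = 1"
  using assms unfolding admissible_p_def by blast

lemma En_lower:
  fixes Y :: "(real^'s)^'i::finite" and p :: "'i \<Rightarrow> 'i \<Rightarrow> real"
  assumes pos: "\<And>x. x \<ge> 0 \<Longrightarrow> \<beta> x > 0"
    and mono: "\<And>x y. 0 \<le> x \<Longrightarrow> x \<le> y \<Longrightarrow> \<beta> y \<le> \<beta> x"
    and adm: "admissible_p p" and card: "CARD('i) \<ge> 2"
    and kl: "k \<noteq> l" "\<And>i j. i \<noteq> j \<Longrightarrow> dd Y k l \<le> dd Y i j"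
    and ab: "a \<noteq> b"
  shows "p a b * (ln (\<beta> (dd Y k l)) - ln (\<beta> (dd Y a b))) \<le> En \<beta> p Y"
proof -
  have ppos: "\<And>i j. i \<noteq> j \<Longrightarrow> p i j > 0" using adm unfolding admissible_p_def by blast
  have tnn: "0 \<le> p i j * (ln (\<beta> (dd Y k l)) - ln (\<beta> (dd Y i j)))" if "i \<noteq> j" for i j
  proof -
    have "\<beta> (dd Y i j) \<le> \<beta> (dd Y k l)" using mono[OF dd_nonneg kl(2)[OF that]] .
    then have "ln (\<beta> (dd Y i j)) \<le> ln (\<beta> (dd Y k l))" using pos[OF dd_nonneg, of Y i j] by simp
    then show ?thesis using ppos[OF that] by simp
  qed
  have Zge: "\<beta> (dd Y k l) \<le> Zf \<beta> Y"
  proof -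
    have "\<beta> (dd Y k l) \<le> (\<Sum>j\<in>UNIV - {k}. \<beta> (dd Y k j))"
      using kl(1) by (intro member_le_sum) (auto intro: less_imp_le[OF pos] dd_nonneg)
    also have "\<dots> \<le> Zf \<beta> Y" unfolding Zf_def
      by (intro member_le_sum[where f="\<lambda>k. \<Sum>l\<in>UNIV - {k}. \<beta> (dd Y k l)"]) (auto intro!: sum_nonneg less_imp_le[OF pos] dd_nonneg)
    finally show ?thesis .
  qed
  have lnZ: "ln (\<beta> (dd Y k l)) \<le> ln (Zf \<beta> Y)"
    using Zge pos[OF dd_nonneg, of Y k l] by simp
  have "p a b * (ln (\<beta> (dd Y k l)) - ln (\<beta> (dd Y a b)))
      \<le> (\<Sum>j\<in>UNIV-{a}. p a j * (ln (\<beta> (dd Y k l)) - ln (\<beta> (dd Y a j))))"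
    using ab by (intro member_le_sum[where f="\<lambda>j. p a j * (ln (\<beta> (dd Y k l)) - ln (\<beta> (dd Y a j)))"] tnn) auto
  also have "\<dots> \<le> (\<Sum>i\<in>UNIV. \<Sum>j\<in>UNIV-{i}. p i j * (ln (\<beta> (dd Y k l)) - ln (\<beta> (dd Y i j))))"
    by (intro member_le_sum[where f="\<lambda>i. \<Sum>j\<in>UNIV-{i}. p i j * (ln (\<beta> (dd Y k l)) - ln (\<beta> (dd Y i j)))"]
        sum_nonneg tnn) auto
  also have "\<dots> = ln (\<beta> (dd Y k l)) * (\<Sum>i\<in>UNIV. \<Sum>j\<in>UNIV-{i}. p i j)
       - (\<Sum>i\<in>UNIV. \<Sum>j\<in>UNIV-{i}. p i j * ln (\<beta> (dd Y i j)))"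
    by (simp add: right_diff_distrib sum_subtractf sum_distrib_left sum_distrib_right mult.commute)
  also have "\<dots> \<le> En \<beta> p Y"
    unfolding En_def sum_p[OF adm] using lnZ by simp
  finally show ?thesis .
qed

definition Ioff :: "(real^'s)^'i::finite \<Rightarrow> real" where
  "Ioff Y = (\<Sum>i\<in>UNIV. \<Sum>j\<in>UNIV-{i}. dd Y i j)"

lemma I_deriv:
  fixes Y :: "real \<Rightarrow> (real^'s)^'i::finite" and p :: "'i \<Rightarrow> 'i \<Rightarrow> real"
  assumes flow: "is_flow \<beta> p Y" and t: "t \<ge> 0"
    and dg: "\<And>x. x \<ge> 0 \<Longrightarrow> deriv (\<lambda>x. ln (\<beta> x)) x = g x"
    and psym: "\<And>i j. i \<noteq> j \<Longrightarrow> p i j = p j i"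
  shows "((\<lambda>t. Ioff (Y t)) has_real_derivative
     8 * real CARD('i) * (\<Sum>i\<in>UNIV. \<Sum>j\<in>UNIV-{i}.
        ((p i j - \<beta> (dd (Y t) i j) / Zf \<beta> (Y t)) * g (dd (Y t) i j)) * dd (Y t) i j)) (at t within {0..})"
proof -
  define y where "y = Y t"
  define F where "F = flow_field \<beta> p y"
  have YF: "(Y has_vector_derivative F) (at t within {0..})"
    using flow t unfolding is_flow_def F_def y_def by auto
  define D where "D i j = 2 * ((y$i - y$j) \<bullet> (F$i - F$j))" for i j
  have hd: "((\<lambda>t. dd (Y t) i j) has_real_derivative D i j) (at t within {0..})" for i j
    unfolding dd_def D_def y_def using dist2_deriv[OF YF] .
  have Id: "((\<lambda>t. Ioff (Y t)) has_real_derivative (\<Sum>i\<in>UNIV. \<Sum>j\<in>UNIV-{i}. D i j)) (at t within {0..})"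
    unfolding Ioff_def by (intro DERIV_sum hd)
  define u where "u i j = (p i j - qij \<beta> y i j) * deriv (\<lambda>x. ln (\<beta> x)) ((norm (y$i - y$j))\<^sup>2)" for i j
  define V where "V i = (\<Sum>j\<in>UNIV-{i}. u i j *\<^sub>R (y$i - y$j))" for i
  define W where "W i = (\<Sum>j\<in>UNIV-{i}. (\<lambda>_ _. 1::real) i j *\<^sub>R (y$i - y$j))" for i
  have Fi: "F$i = 4 *\<^sub>R V i" for i unfolding F_def flow_field_def V_def u_def by simp
  have usym: "u i j = u j i" if "i \<noteq> j" for i j
    unfolding u_def qij_def using psym[OF that] by (simp add: norm_minus_commute)
  have q: "qij \<beta> y i j = \<beta> (dd y i j) / Zf \<beta> y" for i j unfolding qij_def Zf_def dd_def by simp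
  have ug: "u i j = (p i j - \<beta> (dd y i j) / Zf \<beta> y) * g (dd y i j)" for i j
    unfolding u_def q using dg[OF dd_nonneg[of y i j]] by (simp add: dd_def)
  have Wd: "W i - W j = real CARD('i) *\<^sub>R (y$i - y$j)" for i j
  proof -
    have "W i = (\<Sum>k\<in>UNIV. (y$i - y$k))" for i
      unfolding W_def by (subst offdiag_sum) simp_all
    then have hW: "W i = real CARD('i) *\<^sub>R y$i - (\<Sum>k\<in>UNIV. y$k)" for i
      by (simp add: sum_subtractf sum_constant_scaleR del: sum_constant)
    show ?thesis unfolding hW[of i] hW[of j] by (simp add: scaleR_diff_right)
  qed
  have "(\<Sum>i\<in>UNIV. \<Sum>j\<in>UNIV-{i}. D i j)
      = 2 * (\<Sum>i\<in>UNIV. \<Sum>j\<in>UNIV-{i}. (\<lambda>_ _. 1::real) i j * (((\<lambda>i. y$i) i - (\<lambda>i. y$i) j) \<bullet> ((\<lambda>i. F$i) i - (\<lambda>i. F$i) j)))"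
    unfolding D_def by (simp add: sum_distrib_left)
  also have "\<dots> = 2 * (2 * (\<Sum>i\<in>UNIV. F$i \<bullet> W i))"
    using symsum[of "\<lambda>_ _. 1::real" "\<lambda>i. y$i" "\<lambda>i. F$i"] unfolding W_def by simp
  also have "\<dots> = 16 * (\<Sum>i\<in>UNIV. W i \<bullet> V i)"
    by (simp add: Fi sum_distrib_left inner_commute)
  also have "(\<Sum>i\<in>UNIV. W i \<bullet> V i) = (\<Sum>i\<in>UNIV. \<Sum>j\<in>UNIV-{i}. u i j * ((y$i - y$j) \<bullet> (W i - W j))) / 2"
    using symsum[of u "\<lambda>i. y$i" W, OF usym] unfolding V_def by simp
  also have "(\<Sum>i\<in>UNIV. \<Sum>j\<in>UNIV-{i}. u i j * ((y$i - y$j) \<bullet> (W i - W j)))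
      = real CARD('i) * (\<Sum>i\<in>UNIV. \<Sum>j\<in>UNIV-{i}. u i j * dd y i j)"
    unfolding Wd by (simp add: sum_distrib_left dd_def power2_norm_eq_inner mult.left_commute)
  finally have e1: "(\<Sum>i\<in>UNIV. \<Sum>j\<in>UNIV-{i}. D i j)
      = 8 * real CARD('i) * (\<Sum>i\<in>UNIV. \<Sum>j\<in>UNIV-{i}. u i j * dd y i j)" by simp
  have e2: "(\<Sum>i\<in>UNIV. \<Sum>j\<in>UNIV-{i}. u i j * dd y i j)
     = (\<Sum>i\<in>UNIV. \<Sum>j\<in>UNIV-{i}. ((p i j - \<beta> (dd y i j) / Zf \<beta> y) * g (dd y i j)) * dd y i j)"
    by (intro sum.cong refl) (simp only: ug)
  have e3: "(\<Sum>i\<in>UNIV. \<Sum>j\<in>UNIV-{i}. D i j)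
      = 8 * real CARD('i) * (\<Sum>i\<in>UNIV. \<Sum>j\<in>UNIV-{i}. ((p i j - \<beta> (dd y i j) / Zf \<beta> y) * g (dd y i j)) * dd y i j)"
    using e1 unfolding e2 .
  from DERIV_cong[OF Id e3, unfolded y_def] show ?thesis .
qed



lemma card2: "CARD('i::finite) > CARD('s::finite) + 1 \<Longrightarrow> CARD('i) \<ge> 2"
  using finite_UNIV_card_ge_0[where 'a='s] by linarith

lemma dd_le_diam:
  fixes Y :: "(real^'s)^'i::finite"
  assumes "\<forall>i j. dist (Y$i) (Y$j) \<le> dist (Y$a) (Y$b)"
  shows "dd Y i j \<le> dd Y a b"
  using assms unfolding dd_def dist_norm by (auto intro: power_mono)

lemma diam_sq: "(dist (Y$a) (Y$b))\<^sup>2 = dd Y a b"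
  unfolding dd_def dist_norm ..

lemma part2:
  fixes p :: "'i::finite \<Rightarrow> 'i \<Rightarrow> real" and Y :: "real \<Rightarrow> (real^'s)^'i"
  assumes card: "CARD('i) > CARD('s) + 1" and adm: "admissible_p p"
    and flow: "is_flow (\<lambda>x. exp (- x)) p Y"
  shows "\<exists>C. \<forall>t\<ge>0. config_diam (Y t) \<le> C"
proof -
  define \<beta> :: "real \<Rightarrow> real" where "\<beta> = (\<lambda>x. exp (- x))"
  have pos: "\<And>x. x \<ge> 0 \<Longrightarrow> \<beta> x > 0" unfolding \<beta>_def by simp
  have db: "(\<beta> has_real_derivative (\<beta> x * (\<lambda>_. -1) x)) (at x)" for x
    unfolding \<beta>_def by (auto intro!: derivative_eq_intros)
  have dg: "deriv (\<lambda>x. ln (\<beta> x)) x = (\<lambda>_. -1) x" for x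
  proof -
    have "((\<lambda>x. ln (\<beta> x)) has_real_derivative -1) (at x)"
      unfolding \<beta>_def by (simp, auto intro!: derivative_eq_intros)
    then show ?thesis by (simp add: DERIV_imp_deriv)
  qed
  have mono: "\<And>x y. 0 \<le> x \<Longrightarrow> x \<le> y \<Longrightarrow> \<beta> y \<le> \<beta> x" unfolding \<beta>_def by simp
  have psym: "\<And>i j. i \<noteq> j \<Longrightarrow> p i j = p j i" using adm unfolding admissible_p_def by blast
  have c2: "CARD('i) \<ge> 2" using card2[OF card] .
  have card': "CARD('i) \<ge> CARD('s) + 2" using card by linarith
  obtain P0 where P0: "P0 > 0" "\<And>i j. i \<noteq> j \<Longrightarrow> P0 \<le> p i j" using pmin[OF adm] by blast
  define K where "K = En \<beta> p (Y 0)"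
  define N where "N = real CARD('i)"
  have N0: "N > 0" unfolding N_def by simp
  define C where "C = sqrt (max 0 (2 * N * K / P0))"
  have "config_diam (Y t) \<le> C" if t: "t \<ge> 0" for t
  proof -
    define y where "y = Y t"
    have EK: "En \<beta> p y \<le> K" unfolding y_def K_def
      using energy_mono[OF flow[folded \<beta>_def] t pos db dg psym c2] by simp
    obtain a b where ab: "config_diam y = dist (y$a) (y$b)" "\<forall>i j. dist (y$i) (y$j) \<le> config_diam y"
      using diam_attained by blast
    obtain k l where kl: "k \<noteq> l" "\<forall>i j. i \<noteq> j \<longrightarrow> dd y k l \<le> dd y i j"
      using min_pair[OF c2, of "dd y"] by blast
    have C0: "C \<ge> 0" unfolding C_def by simp
    show ?thesis
    proof (cases "a = b")
      case True then show ?thesis using ab C0 y_def by simp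
    next
      case False
      have low: "p a b * (ln (\<beta> (dd y k l)) - ln (\<beta> (dd y a b))) \<le> En \<beta> p y"
        by (rule En_lower[OF pos mono adm c2 kl(1) _ False]) (use kl(2) in auto)
      have "\<forall>i j. dist (y$i) (y$j) \<le> dist (y$a) (y$b)" using ab by simp
    then have hi: "\<And>i j. dd y i j \<le> dd y a b" by (rule dd_le_diam)
      have g: "dd y k l \<le> (1 - 1 / (2 * N)) * dd y a b"
        unfolding N_def dd_def
        by (rule geom[OF card']) (use kl(2) hi in \<open>auto simp: dd_def\<close>)
      have e1: "p a b * (dd y a b - dd y k l) \<le> K"
        using low EK unfolding \<beta>_def by simp
      have "dd y a b / (2 * N) \<le> dd y a b - dd y k l" using g N0 by (simp add: algebra_simps)
      moreover have "dd y a b / (2 * N) \<ge> 0" using N0 dd_nonneg[of y a b] by simp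
      ultimately have "P0 * (dd y a b / (2 * N)) \<le> p a b * (dd y a b - dd y k l)"
        using P0(2)[OF False] P0(1) by (intro mult_mono) auto
      with e1 have "P0 * (dd y a b / (2 * N)) \<le> K" by linarith
      then have "dd y a b \<le> 2 * N * K / P0" using P0(1) N0 by (simp add: field_simps)
      moreover have "(config_diam y)\<^sup>2 = dd y a b" by (simp add: ab(1) diam_sq)
      ultimately have "(config_diam y)\<^sup>2 \<le> max 0 (2 * N * K / P0)" by simp
      then show ?thesis unfolding C_def y_def[symmetric] by (rule real_le_rsqrt)
    qed
  qed
  then show ?thesis by blast
qed



lemma root4_bound:
  fixes x A t :: real
  assumes "x \<ge> 0" "A \<ge> 0" "t \<ge> 0" "(x\<^sup>2)\<^sup>2 \<le> A * t"
  shows "x \<le> A powr (1/4) * t powr (1/4)"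
proof (cases "x = 0")
  case True then show ?thesis by simp
next
  case False
  then have xp: "x > 0" using assms(1) by simp
  have "x = (x powr 4) powr (1/4)" using xp by (simp only: powr_powr) simp
  also have "x powr 4 = (x\<^sup>2)\<^sup>2" using powr_realpow[OF xp, of 4] by simp
  also have "((x\<^sup>2)\<^sup>2) powr (1/4) \<le> (A * t) powr (1/4)"
    using assms by (intro powr_mono2) auto
  also have "\<dots> = A powr (1/4) * t powr (1/4)" by (rule powr_mult)
  finally show ?thesis .
qed

lemma cauchy_db: "x \<ge> (0::real) \<Longrightarrow> ((\<lambda>x. 1 / (1 + x)) has_real_derivative (1/(1+x) * (-1/(1+x)))) (at x)"
  by (rule derivative_eq_intros | simp)+

lemma cauchy_dg: "x \<ge> (0::real) \<Longrightarrow> ((\<lambda>x. ln (1 / (1 + x))) has_real_derivative (-1/(1+x))) (at x)"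
  by (rule derivative_eq_intros | simp)+

lemma tm_alg: "d \<ge> 0 \<Longrightarrow> (X * (- 1 / (1 + d))) * d = X * (1 / (1 + d)) - (X::real)"
  by (simp add: field_simps)

lemma part1:
  fixes p :: "'i::finite \<Rightarrow> 'i \<Rightarrow> real" and Y :: "real \<Rightarrow> (real^'s)^'i"
  assumes card: "CARD('i) > CARD('s) + 1" and adm: "admissible_p p"
    and flow: "is_flow (\<lambda>x. 1 / (1 + x)) p Y"
  shows "\<exists>C. \<forall>t\<ge>1. config_diam (Y t) \<le> C * t powr (1/4)"
proof -
  define \<beta> :: "real \<Rightarrow> real" where "\<beta> = (\<lambda>x. 1 / (1 + x))"
  define g :: "real \<Rightarrow> real" where "g = (\<lambda>x. - 1 / (1 + x))"
  have pos: "\<And>x. x \<ge> 0 \<Longrightarrow> \<beta> x > 0" unfolding \<beta>_def by simp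
  have db: "(\<beta> has_real_derivative (\<beta> x * g x)) (at x)" if "x \<ge> 0" for x
    unfolding \<beta>_def g_def using cauchy_db[OF that] by simp
  have dg: "deriv (\<lambda>x. ln (\<beta> x)) x = g x" if "x \<ge> 0" for x
  proof -
    have "((\<lambda>x. ln (\<beta> x)) has_real_derivative g x) (at x)"
      unfolding \<beta>_def g_def using cauchy_dg[OF that] by simp
    then show ?thesis by (simp add: DERIV_imp_deriv)
  qed
  have mono: "\<And>x y. 0 \<le> x \<Longrightarrow> x \<le> y \<Longrightarrow> \<beta> y \<le> \<beta> x" unfolding \<beta>_def
    by (simp add: frac_le)
  have psym: "\<And>i j. i \<noteq> j \<Longrightarrow> p i j = p j i" using adm unfolding admissible_p_def by blast
  have ppos: "\<And>i j. i \<noteq> j \<Longrightarrow> p i j > 0" using adm unfolding admissible_p_def by blast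
  have c2: "CARD('i) \<ge> 2" using card2[OF card] .
  obtain P0 where P0: "P0 > 0" "\<And>i j. i \<noteq> j \<Longrightarrow> P0 \<le> p i j" using pmin[OF adm] by blast
  define K where "K = En \<beta> p (Y 0)"
  define K1 where "K1 = exp (max 0 K / P0)"
  have K1: "K1 \<ge> 1" unfolding K1_def using P0(1) by simp
  define N where "N = real CARD('i)"
  have N0: "N > 0" unfolding N_def by simp
  define H where "H t = Ioff (Y t) * Ioff (Y t)" for t
  define c where "c = 16 * N^3 * K1"
  have key: "\<exists>H'. (H has_real_derivative H') (at t within {0..}) \<and> H' \<le> c"
    and Dle: "(config_diam (Y t))\<^sup>2 \<le> Ioff (Y t)" if t: "t \<ge> 0" for t
  proof -
    define y where "y = Y t"
    have EK: "En \<beta> p y \<le> K" unfolding y_def K_def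
      using energy_mono[OF flow[folded \<beta>_def] t pos db dg psym c2] by simp
    obtain a b where ab: "config_diam y = dist (y$a) (y$b)" "\<forall>i j. dist (y$i) (y$j) \<le> config_diam y"
      using diam_attained by blast
    obtain k l where kl: "k \<noteq> l" "\<forall>i j. i \<noteq> j \<longrightarrow> dd y k l \<le> dd y i j"
      using min_pair[OF c2, of "dd y"] by blast
    have "\<forall>i j. dist (y$i) (y$j) \<le> dist (y$a) (y$b)" using ab by simp
    then have hi: "\<And>i j. dd y i j \<le> dd y a b" by (rule dd_le_diam)
    define D2 where "D2 = dd y a b"
    define m where "m = dd y k l"
    have m0: "m \<ge> 0" unfolding m_def by (rule dd_nonneg)
    have D20: "D2 \<ge> 0" unfolding D2_def by (rule dd_nonneg)
    have mD: "1 / (1 + m) \<le> K1 / (1 + D2)"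
    proof (cases "a = b")
      case True
      then have "D2 = 0" unfolding D2_def dd_def by simp
      have "1 / (1 + m) \<le> 1" using m0 by simp
      moreover have "K1 / (1 + D2) = K1" using \<open>D2 = 0\<close> by simp
      ultimately show ?thesis using K1 by linarith
    next
      case False
      have low: "p a b * (ln (\<beta> m) - ln (\<beta> D2)) \<le> En \<beta> p y"
        unfolding m_def D2_def by (rule En_lower[OF pos mono adm c2 kl(1) _ False]) (use kl(2) in auto)
      have lnd: "ln (\<beta> m) - ln (\<beta> D2) = ln (1 + D2) - ln (1 + m)"
        unfolding \<beta>_def using m0 D20 by (simp add: ln_div)
      have lnn: "ln (1 + D2) - ln (1 + m) \<ge> 0" using m0 D20 kl(2) hi False
        unfolding m_def D2_def by auto
      have "P0 * (ln (1 + D2) - ln (1 + m)) \<le> p a b * (ln (1 + D2) - ln (1 + m))"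
        using P0(2)[OF False] lnn by (intro mult_right_mono) auto
      also have "\<dots> \<le> max 0 K" using low lnd EK by simp
      finally have "ln (1 + D2) - ln (1 + m) \<le> max 0 K / P0" using P0(1) by (simp add: field_simps)
      then have "exp (ln (1 + D2) - ln (1 + m)) \<le> K1" unfolding K1_def by simp
      then have "(1 + D2) / (1 + m) \<le> K1" using m0 D20 by (simp add: exp_diff)
      then show ?thesis using m0 D20 by (simp add: field_simps)
    qed
    define I' where "I' = 8 * N * (\<Sum>i\<in>UNIV. \<Sum>j\<in>UNIV-{i}.
        ((p i j - \<beta> (dd y i j) / Zf \<beta> y) * g (dd y i j)) * dd y i j)"
    have Id: "((\<lambda>t. Ioff (Y t)) has_real_derivative I') (at t within {0..})"
      unfolding I'_def y_def N_def using I_deriv[OF flow[folded \<beta>_def] t dg psym] by simp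
    have Zp: "Zf \<beta> y > 0" using Zf_pos[OF pos c2] .
    have sq: "(\<Sum>i\<in>UNIV. \<Sum>j\<in>UNIV-{i}. \<beta> (dd y i j) / Zf \<beta> y) = 1"
      using Zp unfolding Zf_def by (simp add: sum_divide_distrib[symmetric])
    have sp: "(\<Sum>i\<in>UNIV. \<Sum>j\<in>UNIV-{i}. p i j) = 1" by (rule sum_p[OF adm])
    have tm: "((p i j - \<beta> (dd y i j) / Zf \<beta> y) * g (dd y i j)) * dd y i j
        = (p i j - \<beta> (dd y i j) / Zf \<beta> y) * (1 / (1 + dd y i j)) - (p i j - \<beta> (dd y i j) / Zf \<beta> y)" for i j
      unfolding g_def by (rule tm_alg[OF dd_nonneg])
    have S1: "(\<Sum>i\<in>UNIV. \<Sum>j\<in>UNIV-{i}. ((p i j - \<beta> (dd y i j) / Zf \<beta> y) * g (dd y i j)) * dd y i j)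
        = (\<Sum>i\<in>UNIV. \<Sum>j\<in>UNIV-{i}. (p i j - \<beta> (dd y i j) / Zf \<beta> y) * (1 / (1 + dd y i j)))"
      unfolding tm sum_subtractf using sq sp by simp
    have S2: "(\<Sum>i\<in>UNIV. \<Sum>j\<in>UNIV-{i}. (p i j - \<beta> (dd y i j) / Zf \<beta> y) * (1 / (1 + dd y i j)))
        \<le> (\<Sum>i\<in>UNIV. \<Sum>j\<in>UNIV-{i}. p i j * (1 / (1 + m)))"
    proof (intro sum_mono)
      fix i j :: 'i assume "j \<in> UNIV - {i}"
      then have ij: "i \<noteq> j" by auto
      have "\<beta> (dd y i j) / Zf \<beta> y * (1 / (1 + dd y i j)) \<ge> 0"
        using pos[OF dd_nonneg, of y i j] Zp dd_nonneg[of y i j] by simp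
      moreover have "p i j * (1 / (1 + dd y i j)) \<le> p i j * (1 / (1 + m))"
        using ppos[OF ij] kl(2) ij m0 unfolding m_def
        by (intro mult_left_mono) (auto simp: frac_le)
      ultimately show "(p i j - \<beta> (dd y i j) / Zf \<beta> y) * (1 / (1 + dd y i j)) \<le> p i j * (1 / (1 + m))"
        by (simp only: left_diff_distrib)
    qed
    have S3: "(\<Sum>i\<in>UNIV. \<Sum>j\<in>UNIV-{i}. p i j * (1 / (1 + m))) = 1 / (1 + m)"
      using sp by (simp add: sum_divide_distrib[symmetric])
    have I'b: "I' \<le> 8 * N * (K1 / (1 + D2))"
      unfolding I'_def S1 using S2 S3 mD N0 by (intro mult_left_mono) auto
    have I0: "Ioff y \<ge> 0" unfolding Ioff_def by (intro sum_nonneg dd_nonneg)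
    have Iup: "Ioff y \<le> N * N * D2"
    proof -
      have "Ioff y \<le> (\<Sum>i\<in>UNIV. \<Sum>j\<in>UNIV. dd y i j)"
        unfolding Ioff_def by (intro sum_mono sum_mono2) (auto intro: dd_nonneg)
      also have "\<dots> \<le> (\<Sum>i\<in>(UNIV::'i set). \<Sum>j\<in>(UNIV::'i set). D2)"
        unfolding D2_def by (intro sum_mono hi)
      finally show ?thesis unfolding N_def by simp
    qed
    show "(config_diam (Y t))\<^sup>2 \<le> Ioff (Y t)"
    proof (cases "a = b")
      case True then show ?thesis using I0 ab(1) y_def by simp
    next
      case False
      have "dd y a b \<le> (\<Sum>j\<in>UNIV-{a}. dd y a j)"
        using False by (intro member_le_sum) (auto intro: dd_nonneg)
      also have "\<dots> \<le> Ioff y" unfolding Ioff_def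
        by (intro member_le_sum[where f="\<lambda>i. \<Sum>j\<in>UNIV-{i}. dd y i j"] sum_nonneg dd_nonneg) auto
      moreover have "(config_diam y)\<^sup>2 = dd y a b" by (simp add: ab(1) diam_sq)
      ultimately show ?thesis unfolding y_def by simp
    qed
    have Hd: "(H has_real_derivative (I' * Ioff y + I' * Ioff y)) (at t within {0..})"
      unfolding H_def y_def using DERIV_mult[OF Id Id] by simp
    have "I' * Ioff y \<le> 8 * N * (K1 / (1 + D2)) * Ioff y"
      using I'b I0 by (rule mult_right_mono)
    also have "\<dots> \<le> 8 * N * (K1 / (1 + D2)) * (N * N * D2)"
      using Iup N0 K1 D20 by (intro mult_left_mono) auto
    also have "\<dots> = 8 * N^3 * K1 * (D2 / (1 + D2))"
      by (simp add: power3_eq_cube field_simps)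
    also have "\<dots> \<le> 8 * N^3 * K1 * 1"
      using N0 K1 D20 by (intro mult_left_mono) auto
    finally have "I' * Ioff y + I' * Ioff y \<le> c" unfolding c_def by (simp add: mult_ac)
    with Hd show "\<exists>H'. (H has_real_derivative H') (at t within {0..}) \<and> H' \<le> c" by blast
  qed
  have "\<forall>t. \<exists>H'. t \<ge> 0 \<longrightarrow> (H has_real_derivative H') (at t within {0..}) \<and> H' \<le> c"
    using key by blast
  then obtain H' where H': "\<And>t. t \<ge> 0 \<Longrightarrow> (H has_real_derivative H' t) (at t within {0..}) \<and> H' t \<le> c"
    by metis
  have Hb: "H t \<le> H 0 + c * t" if "t \<ge> 0" for t
    by (rule growth_bound[where f'=H']) (use H' that in auto)
  define A where "A = H 0 + c"
  have c0: "c \<ge> 0" unfolding c_def using N0 K1 by simp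
  have H00: "H 0 \<ge> 0" unfolding H_def by simp
  have "config_diam (Y t) \<le> A powr (1/4) * t powr (1/4)" if t1: "t \<ge> 1" for t
  proof (rule root4_bound)
    show "0 \<le> config_diam (Y t)"
    proof -
      obtain a b where "config_diam (Y t) = dist (Y t$a) (Y t$b)" using diam_attained by blast
      then show ?thesis by simp
    qed
    show "0 \<le> A" unfolding A_def using c0 H00 by simp
    show "0 \<le> t" using t1 by simp
    have D: "(config_diam (Y t))\<^sup>2 \<le> Ioff (Y t)" using Dle t1 by simp
    have "((config_diam (Y t))\<^sup>2)\<^sup>2 \<le> (Ioff (Y t))\<^sup>2"
      using D by (intro power_mono) auto
    also have "\<dots> = H t" unfolding H_def by (simp add: power2_eq_square)
    also have "\<dots> \<le> H 0 + c * t" using Hb t1 by simp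
    also have "\<dots> \<le> A * t"
    proof -
      have "H 0 * 1 \<le> H 0 * t" using t1 H00 by (intro mult_left_mono) auto
      then show ?thesis unfolding A_def by (simp add: algebra_simps)
    qed
    finally show "((config_diam (Y t))\<^sup>2)\<^sup>2 \<le> A * t" .
  qed
  then show ?thesis by blast
qed


theorem theorem1p1:
  fixes p :: "'i::finite \<Rightarrow> 'i \<Rightarrow> real"
    and Y1 Y2 :: "real \<Rightarrow> (real^'s)^'i"
    and Y0 :: "(real^'s)^'i"
  assumes "CARD('i) > CARD('s) + 1"
    and "admissible_p p"
    and "is_flow (\<lambda>x. 1 / (1 + x)) p Y1" and "Y1 0 = Y0"
    and "is_flow (\<lambda>x. exp (- x)) p Y2" and "Y2 0 = Y0"
  shows "(\<exists>C. \<forall>t\<ge>1. config_diam (Y1 t) \<le> C * t powr (1/4))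
       \<and> (\<exists>C. \<forall>t\<ge>0. config_diam (Y2 t) \<le> C)"
  using part1[OF assms(1,2,3)] part2[OF assms(1,2,5)] by blast

end
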